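(* For every prime $p$, \[ \overline{M}(p)=p\,f(p)-1+\sum_{j=2}^{p} f\!\left(\left\lfloor \frac{p}{j}\right\rfloor\right). \]
   Context: For a nonempty finite set $A$ of positive integers, $(A)$ denotes the greatest common divisor of the elements of $A$. For $m\in\mathbb{N}$, $f(m)$ is the number of nonempty subsets $A\subseteq\{1,2,\ldots,m\}$ with $(A)=1$. For $n\in\mathbb{N}$, \[ \overline{M}(n)=\sum_{\substack{\emptyset\ne A\subseteq\{1,\ldots,n\}\\ \gcd((A),n)=1}}\gcd((A)-1,n), \] with the convention $\gcd(0,n)=n$. *)

theory Defs
  imports Main "HOL-Computational_Algebra.Primes"
begin

definition f_cnt :: "nat \<Rightarrow> nat" where
  "f_cnt m = card {A. A \<subseteq> {1..m} \<and> A \<noteq> {} \<and> Gcd A = 1}"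

(* \<overline>M(n): sum over nonempty A \<subseteq> {1..n} with gcd(Gcd A, n) = 1 of gcd(Gcd A - 1, n);
   since Gcd A \<ge> 1, the natural subtraction is exact, and gcd 0 n = n matches the convention *)
definition Mbar :: "nat \<Rightarrow> nat" where
  "Mbar n = (\<Sum>A\<in>{A. A \<subseteq> {1..n} \<and> A \<noteq> {} \<and> coprime (Gcd A) n}. gcd (Gcd A - 1) n)"

end

theory Submission
  imports Defs
begin

lemma card_gcd_d:
  fixes n d :: nat
  assumes d: "d > 0"
  shows "card {A. A \<subseteq> {1..n} \<and> A \<noteq> {} \<and> Gcd A = d} = f_cnt (n div d)"
proof -
  let ?F = "{B. B \<subseteq> {1..n div d} \<and> B \<noteq> {} \<and> Gcd B = (1::nat)}"
  have eq: "{A. A \<subseteq> {1..n} \<and> A \<noteq> {} \<and> Gcd A = d} = image ((*) d) ` ?F"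
  proof (intro equalityI subsetI)
    fix A assume "A \<in> {A. A \<subseteq> {1..n} \<and> A \<noteq> {} \<and> Gcd A = d}"
    hence A: "A \<subseteq> {1..n}" "A \<noteq> {}" "Gcd A = d" by auto
    have dv: "\<And>x. x \<in> A \<Longrightarrow> d dvd x" using A(3) by (metis Gcd_dvd)
    define B where "B = (\<lambda>x. x div d) ` A"
    have AB: "A = (*) d ` B"
      unfolding B_def image_image using dv by (force simp: image_iff)
    have "B \<subseteq> {1..n div d}"
    proof
      fix k assume "k \<in> B"
      then obtain x where x: "x \<in> A" "k = x div d" unfolding B_def by auto
      then obtain m where m: "x = d * m" using dv by blast
      have "1 \<le> x" "x \<le> n" using A(1) x by auto
      then show "k \<in> {1..n div d}" using m x d
        by (auto simp: less_eq_div_iff_mult_less_eq mult.commute)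
    qed
    moreover have "B \<noteq> {}" using A(2) B_def by auto
    moreover have "Gcd B = 1"
    proof -
      have e: "Gcd A = d * Gcd B" unfolding AB by (simp only: Gcd_mult normalize_nat_def id_apply)
      have "d * Gcd B = d * 1" using A(3) e by (metis mult_1_right)
      thus ?thesis using d by (metis mult_left_cancel less_irrefl)
    qed
    ultimately show "A \<in> image ((*) d) ` ?F" using AB by blast
  next
    fix A assume "A \<in> image ((*) d) ` ?F"
    then obtain B where B: "B \<subseteq> {1..n div d}" "B \<noteq> {}" "Gcd B = 1" "A = (*) d ` B" by auto
    have "A \<subseteq> {1..n}"
    proof
      fix x assume "x \<in> A"
      then obtain k where k: "k \<in> B" "x = d * k" using B by auto
      hence "1 \<le> k" "k \<le> n div d" using B by auto
      hence "d * k \<le> d * (n div d)" by simp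
      also have "\<dots> \<le> n" by simp
      finally show "x \<in> {1..n}" using k \<open>1 \<le> k\<close> d by (simp add: Suc_le_eq)
    qed
    moreover have "Gcd A = d" using B(3,4) Gcd_mult[of d B] by (simp only: mult_1_right normalize_nat_def id_apply)
    ultimately show "A \<in> {A. A \<subseteq> {1..n} \<and> A \<noteq> {} \<and> Gcd A = d}" using B by auto
  qed
  have inj: "inj_on (image ((*) d)) ?F"
    by (rule inj_on_image) (auto intro: inj_onI simp: d)
  show ?thesis unfolding eq f_cnt_def by (rule card_image[OF inj])
qed

lemma f1: "f_cnt 1 = 1"
proof -
  have "{A. A \<subseteq> {1..1::nat} \<and> A \<noteq> {} \<and> Gcd A = 1} = {{1}}"
    by (auto simp: subset_singleton_iff)
  thus ?thesis by (simp add: f_cnt_def)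
qed

lemma cop_small:
  fixes p k :: nat
  assumes "prime p" "0 < k" "k < p"
  shows "coprime k p"
proof -
  have "\<not> p dvd k" using assms by (auto dest: dvd_imp_le)
  hence "coprime p k" using prime_imp_coprime[OF assms(1)] by blast
  thus ?thesis by (simp add: coprime_commute)
qed

theorem mainTheorem5:
  fixes p :: nat
  assumes "prime p"
  shows "int (Mbar p) = int p * int (f_cnt p) - 1 + (\<Sum>j=2..p. int (f_cnt (p div j)))"
proof -
  have p2: "p \<ge> 2" using assms prime_ge_2_nat by blast
  define T where "T = {A. A \<subseteq> {1..p} \<and> A \<noteq> {}}"
  define h where "h d = (if d = 1 then p else if d < p then 1 else (0::nat))" for d
  have finT: "finite T" unfolding T_def
    by (rule finite_subset[of _ "Pow {1..p}"]) auto
  have gcdin: "Gcd A \<in> {1..p}" if "A \<in> T" for A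
  proof -
    have T: "A \<subseteq> {1..p}" "A \<noteq> {}" using that unfolding T_def by auto
    then obtain x where x0: "x \<in> A" by blast
    hence x: "x \<in> A" "1 \<le> x" "x \<le> p" using T by auto
    have "Gcd A dvd x" using x by (simp add: Gcd_dvd)
    hence "Gcd A \<le> x" using x by (auto intro: dvd_imp_le)
    moreover have "Gcd A \<noteq> 0" using \<open>Gcd A dvd x\<close> x by (metis dvd_0_left_iff not_one_le_zero)
    ultimately have "1 \<le> Gcd A" "Gcd A \<le> p" using x(3) by linarith+
    thus ?thesis by simp
  qed
  have hval: "(if coprime (Gcd A) p then gcd (Gcd A - 1) p else 0) = h (Gcd A)" if "A \<in> T" for A
  proof -
    have g: "1 \<le> Gcd A" "Gcd A \<le> p" using gcdin[OF that] by auto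
    show ?thesis
    proof (cases "Gcd A = 1")
      case True thus ?thesis by (simp add: h_def)
    next
      case F: False
      show ?thesis
      proof (cases "Gcd A < p")
        case True
        have "coprime (Gcd A) p"
          using True g F assms by (intro cop_small) auto
        moreover have "coprime (Gcd A - 1) p"
          using True g F assms by (intro cop_small) auto
        ultimately show ?thesis using F True by (simp add: h_def coprime_iff_gcd_eq_1)
      next
        case False
        hence "Gcd A = p" using g by simp
        thus ?thesis using F p2 by (simp add: h_def)
      qed
    qed
  qed
  have "Mbar p = (\<Sum>A\<in>T. if coprime (Gcd A) p then gcd (Gcd A - 1) p else 0)"
    unfolding Mbar_def T_def by (rule sum.mono_neutral_cong_left) (auto intro: finite_subset[OF _ finT[unfolded T_def]])
  also have "\<dots> = (\<Sum>A\<in>T. h (Gcd A))" using hval by (rule sum.cong[OF refl])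
  also have "\<dots> = (\<Sum>d\<in>{1..p}. \<Sum>A\<in>{A \<in> T. Gcd A = d}. h (Gcd A))"
    by (rule sum.group[symmetric]) (use finT gcdin in auto)
  also have "\<dots> = (\<Sum>d\<in>{1..p}. h d * f_cnt (p div d))"
  proof (rule sum.cong[OF refl])
    fix d assume "d \<in> {1..p}"
    hence "d > 0" by auto
    have "{A \<in> T. Gcd A = d} = {A. A \<subseteq> {1..p} \<and> A \<noteq> {} \<and> Gcd A = d}" unfolding T_def by auto
    thus "(\<Sum>A\<in>{A \<in> T. Gcd A = d}. h (Gcd A)) = h d * f_cnt (p div d)"
      using card_gcd_d[OF \<open>d > 0\<close>, of p] by simp
  qed
  finally have M: "Mbar p = (\<Sum>d\<in>{1..p}. h d * f_cnt (p div d))" .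
  have s1: "{1..p} = insert 1 {2..p}" using p2 by auto
  have s2: "{2..p} = insert p {2..<p}" using p2 by auto
  have "int (Mbar p) = (\<Sum>d\<in>{1..p}. int (h d * f_cnt (p div d)))" using M by simp
  also have "\<dots> = int p * int (f_cnt p) + (\<Sum>d\<in>{2..<p}. int (f_cnt (p div d)))"
  proof -
    let ?F = "\<lambda>d. int (h d * f_cnt (p div d))"
    have "(\<Sum>d\<in>{1..p}. ?F d) = ?F 1 + (\<Sum>d\<in>{2..p}. ?F d)"
      unfolding s1 by (subst sum.insert) auto
    also have "(\<Sum>d\<in>{2..p}. ?F d) = ?F p + (\<Sum>d\<in>{2..<p}. ?F d)"
      unfolding s2 by (subst sum.insert) auto
    also have "(\<Sum>d\<in>{2..<p}. ?F d) = (\<Sum>d\<in>{2..<p}. int (f_cnt (p div d)))"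
      by (rule sum.cong) (auto simp: h_def)
    finally show ?thesis using p2 by (simp add: h_def)
  qed
  also have "(\<Sum>j=2..p. int (f_cnt (p div j))) = 1 + (\<Sum>d\<in>{2..<p}. int (f_cnt (p div d)))"
    using p2 f1 by (simp add: s2)
  ultimately show ?thesis by simp
qed

end
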